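(* Let $\mathcal{S}_0$ and $\mathcal{S}_1$ be two MSyDSs with common node set $V$ such that every local function is a threshold function and every master function is \texttt{OR}. Let $\tau$ be the largest threshold value occurring among the local functions of $\mathcal{S}_0$ and $\mathcal{S}_1$. Then $\mathcal{S}_0$ and $\mathcal{S}_1$ are inequivalent if and only if there is an inequivalence witness for $\mathcal{S}_0$ and $\mathcal{S}_1$ in which at most $\tau$ nodes have state 1.
   Context: A multilayer synchronous dynamical system (MSyDS) $\mathcal{S}$ over $\mathbb{B}=\{0,1\}$ with $k\ge 1$ layers consists of: a finite node set $V$; undirected simple graphs $G_i=(V,E_i)$, $1\le i\le k$ (all layers share the node set $V$); for each layer $i$ and node $v$ a local function $f_{i,v}$ with output in $\mathbb{B}$ whose inputs are the states of the nodes in the closed neighborhood of $v$ in $G_i$ ($v$ and its neighbors in $G_i$); and for each node $v$ a master function $\psi_v:\mathbb{B}^k\to\mathbb{B}$. A configuration is a map $\mathcal{C}:V\to\mathbb{B}$; its successor is $\mathcal{C}'$ with $\mathcal{C}'(v)=\psi_v(f_{1,v}(\mathcal{C}),\dots,f_{k,v}(\mathcal{C}))$ for all $v$ (synchronous update), where $f_{i,v}(\mathcal{C})$ is $f_{i,v}$ evaluated on the states in $\mathcal{C}$ of the closed neighborhood of $v$ in $G_i$. For an integer $t\ge 0$, the $t$-threshold function equals 1 iff at least $t$ of its inputs equal 1; a threshold local function is specified by its threshold $t$. \texttt{OR} is 1 iff at least one input is 1. Two MSyDSs on the same node set are equivalent if every configuration has the same successor under both (i.e., their phase spaces are identical), and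 inequivalent otherwise. An inequivalence witness for two MSyDSs on node set $V$ is a configuration of $V$ whose successors under the two systems differ. *)

theory Defs
  imports Main
begin

definition simple_graph :: "'a set \<Rightarrow> ('a \<Rightarrow> 'a \<Rightarrow> bool) \<Rightarrow> bool" where
  "simple_graph V E \<longleftrightarrow>
     (\<forall>u v. E u v \<longrightarrow> u \<in> V \<and> v \<in> V \<and> u \<noteq> v \<and> E v u)"

definition closed_nbhd :: "('a \<Rightarrow> 'a \<Rightarrow> bool) \<Rightarrow> 'a \<Rightarrow> 'a set" where
  "closed_nbhd E v = insert v {u. E v u}"

text \<open>Configurations of V: maps V to {0,1} (False = 0, True = 1), fixed to 0 outside V.\<close>
definition configs :: "'a set \<Rightarrow> ('a \<Rightarrow> bool) set" where
  "configs V = {C. \<forall>u. u \<notin> V \<longrightarrow> \<not> C u}"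

definition threshold_fn :: "nat \<Rightarrow> 'a set \<Rightarrow> ('a \<Rightarrow> bool) \<Rightarrow> bool" where
  "threshold_fn t S C \<longleftrightarrow> t \<le> card {u \<in> S. C u}"

definition OR_fn :: "bool list \<Rightarrow> bool" where
  "OR_fn bs \<longleftrightarrow> (\<exists>b \<in> set bs. b)"

text \<open>An MSyDS with k layers G_i = (V, E i), i < k, all of whose local functions are
  threshold functions (threshold t i v for layer i, node v) and all master functions OR.\<close>
definition thr_or_msyds :: "'a set \<Rightarrow> nat \<Rightarrow> (nat \<Rightarrow> 'a \<Rightarrow> 'a \<Rightarrow> bool) \<Rightarrow> bool" where
  "thr_or_msyds V k E \<longleftrightarrow> finite V \<and> k \<ge> 1 \<and> (\<forall>i<k. simple_graph V (E i))"

definition thr_or_succ ::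
  "nat \<Rightarrow> (nat \<Rightarrow> 'a \<Rightarrow> 'a \<Rightarrow> bool) \<Rightarrow> (nat \<Rightarrow> 'a \<Rightarrow> nat) \<Rightarrow> ('a \<Rightarrow> bool) \<Rightarrow> 'a \<Rightarrow> bool" where
  "thr_or_succ k E t C v =
     OR_fn (map (\<lambda>i. threshold_fn (t i v) (closed_nbhd (E i) v) C) [0..<k])"

definition ineq_witness ::
  "'a set \<Rightarrow> nat \<Rightarrow> (nat \<Rightarrow> 'a \<Rightarrow> 'a \<Rightarrow> bool) \<Rightarrow> (nat \<Rightarrow> 'a \<Rightarrow> nat)
   \<Rightarrow> nat \<Rightarrow> (nat \<Rightarrow> 'a \<Rightarrow> 'a \<Rightarrow> bool) \<Rightarrow> (nat \<Rightarrow> 'a \<Rightarrow> nat) \<Rightarrow> ('a \<Rightarrow> bool) \<Rightarrow> bool" where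
  "ineq_witness V k0 E0 t0 k1 E1 t1 C \<longleftrightarrow>
     C \<in> configs V \<and> (\<exists>v \<in> V. thr_or_succ k0 E0 t0 C v \<noteq> thr_or_succ k1 E1 t1 C v)"

definition equivalent ::
  "'a set \<Rightarrow> nat \<Rightarrow> (nat \<Rightarrow> 'a \<Rightarrow> 'a \<Rightarrow> bool) \<Rightarrow> (nat \<Rightarrow> 'a \<Rightarrow> nat)
   \<Rightarrow> nat \<Rightarrow> (nat \<Rightarrow> 'a \<Rightarrow> 'a \<Rightarrow> bool) \<Rightarrow> (nat \<Rightarrow> 'a \<Rightarrow> nat) \<Rightarrow> bool" where
  "equivalent V k0 E0 t0 k1 E1 t1 \<longleftrightarrow>
     (\<forall>C \<in> configs V. \<forall>v \<in> V. thr_or_succ k0 E0 t0 C v = thr_or_succ k1 E1 t1 C v)"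

end

theory Submission
  imports Defs
begin

lemma succ_mono:
  assumes "finite V" "C \<in> configs V" "\<And>u. C' u \<Longrightarrow> C u" "thr_or_succ k E t C' v"
  shows "thr_or_succ k E t C v"
proof -
  from assms(4) obtain i where i: "i < k" "t i v \<le> card {u \<in> closed_nbhd (E i) v. C' u}"
    by (auto simp: thr_or_succ_def OR_fn_def threshold_fn_def)
  have fin: "finite {u \<in> closed_nbhd (E i) v. C u}"
    using assms(1,2) by (auto simp: configs_def intro: finite_subset[of _ V])
  have "card {u \<in> closed_nbhd (E i) v. C' u} \<le> card {u \<in> closed_nbhd (E i) v. C u}"
    using assms(3) by (intro card_mono[OF fin]) auto
  with i show ?thesis
    unfolding thr_or_succ_def OR_fn_def threshold_fn_def
    by (auto intro!: bexI[of _ i])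
qed

lemma key:
  assumes "finite V" "C \<in> configs V" "thr_or_succ k0 E0 t0 C v" "\<not> thr_or_succ k1 E1 t1 C v"
  shows "\<exists>C' i. C' \<in> configs V \<and> thr_or_succ k0 E0 t0 C' v \<and> \<not> thr_or_succ k1 E1 t1 C' v
           \<and> i < k0 \<and> card {u \<in> V. C' u} \<le> t0 i v"
proof -
  from assms(3) obtain i where i: "i < k0" "t0 i v \<le> card {u \<in> closed_nbhd (E0 i) v. C u}"
    by (auto simp: thr_or_succ_def OR_fn_def threshold_fn_def)
  have fin: "finite {u \<in> closed_nbhd (E0 i) v. C u}"
    using assms(1,2) by (auto simp: configs_def intro: finite_subset[of _ V])
  obtain S where S: "S \<subseteq> {u \<in> closed_nbhd (E0 i) v. C u}" "card S = t0 i v"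
    using obtain_subset_with_card_n[OF i(2)] by metis
  define C' where "C' = (\<lambda>u. u \<in> S)"
  have sub: "\<And>u. C' u \<Longrightarrow> C u" using S(1) by (auto simp: C'_def)
  have cC': "C' \<in> configs V" using sub assms(2) by (auto simp: configs_def)
  have SV: "S \<subseteq> V" using sub assms(2) by (auto simp: configs_def C'_def)
  have e1: "{u \<in> closed_nbhd (E0 i) v. C' u} = S" using S(1) by (auto simp: C'_def)
  have s0: "thr_or_succ k0 E0 t0 C' v"
    using i(1) S(2) e1 unfolding thr_or_succ_def OR_fn_def threshold_fn_def
    by (auto intro!: bexI[of _ i])
  have s1: "\<not> thr_or_succ k1 E1 t1 C' v"
    using succ_mono[OF assms(1,2) sub] assms(4) by blast
  have "{u \<in> V. C' u} = S" using SV by (auto simp: C'_def)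
  then show ?thesis using cC' s0 s1 i(1) S(2) by (intro exI[of _ C'] exI[of _ i]) auto
qed

theorem lemma5p2:
  fixes V :: "'a set" and k0 k1 :: nat
    and E0 E1 :: "nat \<Rightarrow> 'a \<Rightarrow> 'a \<Rightarrow> bool" and t0 t1 :: "nat \<Rightarrow> 'a \<Rightarrow> nat"
  assumes "thr_or_msyds V k0 E0" and "thr_or_msyds V k1 E1"
  defines "\<tau> \<equiv> Max ({t0 i v | i v. i < k0 \<and> v \<in> V} \<union> {t1 i v | i v. i < k1 \<and> v \<in> V})"
  shows "\<not> equivalent V k0 E0 t0 k1 E1 t1 \<longleftrightarrow>
         (\<exists>C. ineq_witness V k0 E0 t0 k1 E1 t1 C \<and> card {v \<in> V. C v} \<le> \<tau>)"
proof
  assume "\<exists>C. ineq_witness V k0 E0 t0 k1 E1 t1 C \<and> card {v \<in> V. C v} \<le> \<tau>"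
  then show "\<not> equivalent V k0 E0 t0 k1 E1 t1"
    by (auto simp: ineq_witness_def equivalent_def)
next
  have finV: "finite V" using assms(1) by (simp add: thr_or_msyds_def)
  have f0: "finite {t0 i v | i v. i < k0 \<and> v \<in> V}"
  proof -
    have "{t0 i v | i v. i < k0 \<and> v \<in> V} = (\<lambda>(i,v). t0 i v) ` ({..<k0} \<times> V)" by auto
    then show ?thesis using finV by simp
  qed
  have f1: "finite {t1 i v | i v. i < k1 \<and> v \<in> V}"
  proof -
    have "{t1 i v | i v. i < k1 \<and> v \<in> V} = (\<lambda>(i,v). t1 i v) ` ({..<k1} \<times> V)" by auto
    then show ?thesis using finV by simp
  qed
  have fin: "finite ({t0 i v | i v. i < k0 \<and> v \<in> V} \<union> {t1 i v | i v. i < k1 \<and> v \<in> V})"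
    using f0 f1 by simp
  assume "\<not> equivalent V k0 E0 t0 k1 E1 t1"
  then obtain C v where C: "C \<in> configs V" "v \<in> V"
    "thr_or_succ k0 E0 t0 C v \<noteq> thr_or_succ k1 E1 t1 C v"
    by (auto simp: equivalent_def)
  show "\<exists>C. ineq_witness V k0 E0 t0 k1 E1 t1 C \<and> card {v \<in> V. C v} \<le> \<tau>"
  proof (cases "thr_or_succ k0 E0 t0 C v")
    case True
    with C obtain C' i where C': "C' \<in> configs V" "thr_or_succ k0 E0 t0 C' v"
      "\<not> thr_or_succ k1 E1 t1 C' v" "i < k0" "card {u \<in> V. C' u} \<le> t0 i v"
      using key[OF finV C(1), of k0 E0 t0 v k1 E1 t1] by blast
    have "t0 i v \<le> \<tau>" unfolding \<tau>_def
      by (rule Max_ge[OF fin]) (use C'(4) C(2) in blast)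
    then show ?thesis using C' C(2) by (intro exI[of _ C']) (auto simp: ineq_witness_def)
  next
    case False
    with C obtain C' i where C': "C' \<in> configs V" "thr_or_succ k1 E1 t1 C' v"
      "\<not> thr_or_succ k0 E0 t0 C' v" "i < k1" "card {u \<in> V. C' u} \<le> t1 i v"
      using key[OF finV C(1), of k1 E1 t1 v k0 E0 t0] by blast
    have "t1 i v \<le> \<tau>" unfolding \<tau>_def
      by (rule Max_ge[OF fin]) (use C'(4) C(2) in blast)
    then show ?thesis using C' C(2) by (intro exI[of _ C']) (auto simp: ineq_witness_def)
  qed
qed

end
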